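(* Let $y\in\mathbb R^n$ have distinct values $\lambda_1<\cdots<\lambda_s$ with multiplicities $m_1,\ldots,m_s$, and let $0\le\gamma<1$. With $x_n:=1-\gamma-x_1-\cdots-x_{n-1}$, $$\int_0^{1-\gamma}\int_0^{1-\gamma-x_1}\cdots\int_0^{1-\gamma-x_1-\cdots-x_{n-2}}e^{\langle y,x\rangle}\,dx_{n-1}\cdots dx_1=\frac{\det M(y,1-\gamma)}{\prod_{i<j}(\lambda_j-\lambda_i)^{m_im_j}}.$$ Moreover only the final row of $M(y,1-\gamma)$ depends on $\gamma$.
   Context: For $z\in\mathbb R^n$ with distinct values $\kappa_1<\cdots<\kappa_s$ of multiplicities $m_1,\ldots,m_s$ and $c\in\mathbb R$, $M(z,c)$ is the $n\times n$ matrix with columns indexed by pairs $(i,j)$, $1\le i\le s$, $0\le j\le m_i-1$ (lexicographic order), rows $r=0,\ldots,n-2$ plus a final row; the entry in row $r$, column $(i,j)$ is $\binom rj\kappa_i^{r-j}$ ($0$ if $j>r$), and the final-row entry in column $(i,j)$ is $c^je^{c\kappa_i}/j!$. *)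

theory Defs
  imports "HOL-Analysis.Analysis" "Jordan_Normal_Form.Determinant"
begin

text \<open>Vectors in R^n are functions nat => real, only the entries 0..n-1 matter.\<close>

definition dvals :: "(nat \<Rightarrow> real) \<Rightarrow> nat \<Rightarrow> real list" where
  "dvals z n = sorted_list_of_set (z ` {..<n})"

definition mult :: "(nat \<Rightarrow> real) \<Rightarrow> nat \<Rightarrow> real \<Rightarrow> nat" where
  "mult z n v = card {k. k < n \<and> z k = v}"

text \<open>Column labels (i,j), 0 <= i < s, 0 <= j < m_i, in lexicographic order (0-based).\<close>
definition col_labels :: "(nat \<Rightarrow> real) \<Rightarrow> nat \<Rightarrow> (nat \<times> nat) list" where
  "col_labels z n = concat (map (\<lambda>i. map (\<lambda>j. (i, j)) [0..<mult z n (dvals z n ! i)])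
                                [0..<length (dvals z n)])"

definition Mmat :: "(nat \<Rightarrow> real) \<Rightarrow> nat \<Rightarrow> real \<Rightarrow> real mat" where
  "Mmat z n c = mat n n (\<lambda>(r, col).
      (let i = fst (col_labels z n ! col); j = snd (col_labels z n ! col); k = dvals z n ! i in
       if r < n - 1 then (if j \<le> r then of_nat (r choose j) * k ^ (r - j) else 0)
       else c ^ j * exp (c * k) / fact j))"

text \<open>Iterated integral: integrate coordinate d from 0 to r, then coordinate d+1 from 0 to
  r - x_d, etc., k coordinates in total; x holds the already fixed coordinates.\<close>
fun iter_int :: "nat \<Rightarrow> nat \<Rightarrow> real \<Rightarrow> ((nat \<Rightarrow> real) \<Rightarrow> real) \<Rightarrow> (nat \<Rightarrow> real) \<Rightarrow> real" where
  "iter_int 0 d r F x = F x"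
| "iter_int (Suc k) d r F x = (LBINT t=0..r. iter_int k (Suc d) (r - t) F (x(d := t)))"

end

theory Submission
  imports Defs "HOL-Computational_Algebra.Polynomial_FPS"
begin


fun gs :: "nat \<Rightarrow> (nat \<Rightarrow> real) \<Rightarrow> nat \<Rightarrow> real" where
  "gs 0 y m = 0"
| "gs (Suc 0) y m = y 0 ^ m"
| "gs (Suc (Suc n)) y 0 = 0"
| "gs (Suc (Suc n)) y (Suc m) = (\<Sum>p\<le>m. y 0 ^ p * gs (Suc n) (\<lambda>i. y (Suc i)) (m - p))"

lemma gs_rec: "gs (Suc (Suc n)) y (Suc m) = gs (Suc n) (\<lambda>i. y (Suc i)) m + y 0 * gs (Suc (Suc n)) y m"
proof (cases m)
  case 0 then show ?thesis by simp
next
  case (Suc k)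
  have "gs (Suc (Suc n)) y (Suc m) = (\<Sum>p\<le>Suc k. y 0 ^ p * gs (Suc n) (\<lambda>i. y (Suc i)) (Suc k - p))"
    using Suc by simp
  also have "\<dots> = gs (Suc n) (\<lambda>i. y (Suc i)) (Suc k) + (\<Sum>p\<le>k. y 0 ^ Suc p * gs (Suc n) (\<lambda>i. y (Suc i)) (k - p))"
    by (subst sum.atMost_Suc_shift) simp
  also have "(\<Sum>p\<le>k. y 0 ^ Suc p * gs (Suc n) (\<lambda>i. y (Suc i)) (k - p)) = y 0 * gs (Suc (Suc n)) y m"
    using Suc by (simp add: sum_distrib_left mult.assoc)
  finally show ?thesis using Suc by simp
qed

lemma gs_bound: "\<exists>K\<ge>1. \<forall>m. \<bar>gs (Suc n) y m\<bar> \<le> K ^ m"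
proof (induction n arbitrary: y)
  case 0
  show ?case by (rule exI[of _ "max 1 \<bar>y 0\<bar>"]) (auto simp: power_abs intro: power_mono)
next
  case (Suc n)
  obtain K where K: "K \<ge> 1" "\<And>m. \<bar>gs (Suc n) (\<lambda>i. y (Suc i)) m\<bar> \<le> K ^ m"
    using Suc.IH by blast
  define L where "L = max K \<bar>y 0\<bar>"
  have L1: "L \<ge> 1" using K unfolding L_def by simp
  have "\<bar>gs (Suc (Suc n)) y m\<bar> \<le> (2 * L) ^ m" for m
  proof (cases m)
    case 0 then show ?thesis by simp
  next
    case (Suc k)
    have "\<bar>gs (Suc (Suc n)) y m\<bar> \<le> (\<Sum>p\<le>k. \<bar>y 0 ^ p * gs (Suc n) (\<lambda>i. y (Suc i)) (k - p)\<bar>)"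
      using Suc by (simp del: power_Suc)
    also have "\<dots> \<le> (\<Sum>p\<le>k. L ^ k)"
    proof (rule sum_mono)
      fix p assume p: "p \<in> {..k}"
      have "\<bar>y 0 ^ p\<bar> \<le> L ^ p" unfolding power_abs L_def by (rule power_mono) auto
      moreover have "\<bar>gs (Suc n) (\<lambda>i. y (Suc i)) (k - p)\<bar> \<le> L ^ (k - p)"
        using K(2)[of "k-p"] power_mono[of K L "k-p"] K(1) unfolding L_def by force
      ultimately have "\<bar>y 0 ^ p * gs (Suc n) (\<lambda>i. y (Suc i)) (k - p)\<bar> \<le> L ^ p * L ^ (k - p)"
        by (simp add: abs_mult mult_mono)
      also have "\<dots> = L ^ k" using p by (simp add: power_add[symmetric])
      finally show "\<bar>y 0 ^ p * gs (Suc n) (\<lambda>i. y (Suc i)) (k - p)\<bar> \<le> L ^ k" .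
    qed
    also have "\<dots> = real (Suc k) * L ^ k" by simp
    also have "\<dots> \<le> 2 ^ Suc k * L ^ Suc k"
    proof -
      have "real (Suc k) \<le> 2 ^ Suc k"
        by (induction k) auto
      moreover have "L ^ k \<le> L ^ Suc k" using L1 by (simp add: power_increasing)
      ultimately show ?thesis using L1 by (intro mult_mono) auto
    qed
    finally show ?thesis using Suc by (metis power_mult_distrib)
  qed
  then show ?case using L1 by (intro exI[of _ "2*L"]) auto
qed

definition Gfun :: "nat \<Rightarrow> (nat \<Rightarrow> real) \<Rightarrow> real \<Rightarrow> real" where
  "Gfun n y r = (\<Sum>m. gs n y m / fact m * r ^ m)"

lemma gs_summable: "summable (\<lambda>m. gs (Suc n) y m / fact m * r ^ m)"
proof -
  obtain K where K: "K \<ge> 1" "\<And>m. \<bar>gs (Suc n) y m\<bar> \<le> K ^ m" using gs_bound by blast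
  have "summable (\<lambda>m. inverse (fact m) * (K * \<bar>r\<bar>) ^ m)" by (rule summable_exp)
  then show ?thesis
  proof (rule summable_comparison_test[rotated], intro exI allI impI)
    fix m :: nat
    have "norm (gs (Suc n) y m / fact m * r ^ m) = \<bar>gs (Suc n) y m\<bar> * \<bar>r\<bar> ^ m / fact m"
      by (simp add: abs_mult power_abs)
    also have "\<dots> \<le> K ^ m * \<bar>r\<bar> ^ m / fact m"
      using K(2)[of m] by (intro divide_right_mono mult_right_mono) auto
    also have "\<dots> = inverse (fact m) * (K * \<bar>r\<bar>) ^ m" by (simp add: power_mult_distrib field_simps)
    finally show "norm (gs (Suc n) y m / fact m * r ^ m) \<le> inverse (fact m) * (K * \<bar>r\<bar>) ^ m" .
  qed
qed

lemma Gfun_deriv_gen: "((Gfun (Suc n) y) has_field_derivative (\<Sum>m. gs (Suc n) y (Suc m) / fact m * x ^ m)) (at x)"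
proof -
  have d: "diffs (\<lambda>m. gs (Suc n) y m / fact m) m = gs (Suc n) y (Suc m) / fact m" for m
    unfolding diffs_def by (simp add: field_simps del: of_nat_Suc)
  have "((\<lambda>x. \<Sum>m. gs (Suc n) y m / fact m * x ^ m) has_field_derivative
        (\<Sum>m. diffs (\<lambda>m. gs (Suc n) y m / fact m) m * x ^ m)) (at x)"
    by (rule termdiffs_strong_converges_everywhere) (rule gs_summable)
  then show ?thesis unfolding d Gfun_def[abs_def] .
qed

lemma Gfun_cont: "isCont (Gfun (Suc n) y) x"
  using Gfun_deriv_gen DERIV_isCont by blast

lemma Gfun_deriv: "((Gfun (Suc (Suc n)) y) has_field_derivative
    (Gfun (Suc n) (\<lambda>i. y (Suc i)) x + y 0 * Gfun (Suc (Suc n)) y x)) (at x)"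
proof -
  have "(\<Sum>m. gs (Suc (Suc n)) y (Suc m) / fact m * x ^ m) =
        (\<Sum>m. gs (Suc n) (\<lambda>i. y (Suc i)) m / fact m * x ^ m + y 0 * (gs (Suc (Suc n)) y m / fact m * x ^ m))"
    by (simp only: gs_rec) (simp add: algebra_simps add_divide_distrib)
  also have "\<dots> = (\<Sum>m. gs (Suc n) (\<lambda>i. y (Suc i)) m / fact m * x ^ m) + (\<Sum>m. y 0 * (gs (Suc (Suc n)) y m / fact m * x ^ m))"
    by (rule suminf_add[OF gs_summable summable_mult[OF gs_summable], symmetric])
  also have "(\<Sum>m. y 0 * (gs (Suc (Suc n)) y m / fact m * x ^ m)) = y 0 * (\<Sum>m. gs (Suc (Suc n)) y m / fact m * x ^ m)"
    by (rule suminf_mult[OF gs_summable])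
  also have "(\<Sum>m. gs (Suc n) (\<lambda>i. y (Suc i)) m / fact m * x ^ m) + y 0 * (\<Sum>m. gs (Suc (Suc n)) y m / fact m * x ^ m)
     = Gfun (Suc n) (\<lambda>i. y (Suc i)) x + y 0 * Gfun (Suc (Suc n)) y x"
    unfolding Gfun_def ..
  finally show ?thesis using Gfun_deriv_gen[of "Suc n" y x] by simp
qed

lemma Gfun_one: "Gfun (Suc 0) y r = exp (y 0 * r)"
  unfolding Gfun_def exp_def by (simp add: power_mult_distrib divide_inverse mult_ac)

lemma Gfun_zero: "Gfun (Suc (Suc n)) y 0 = 0"
proof -
  have "(\<lambda>m. gs (Suc (Suc n)) y m / fact m * 0 ^ m) = (\<lambda>m. 0)"
    by (auto simp: zero_power)
    (metis gs.simps(3) zero_power gr0I mult_zero_left mult_zero_right div_0)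
  then show ?thesis unfolding Gfun_def by simp
qed

lemma conv:
  assumes "r \<ge> 0"
  shows "(LBINT t=0..r. exp (y 0 * t) * Gfun (Suc n) (\<lambda>i. y (Suc i)) (r - t)) = Gfun (Suc (Suc n)) y r"
proof -
  define H where "H = Gfun (Suc (Suc n)) y"
  define f where "f = Gfun (Suc n) (\<lambda>i. y (Suc i))"
  define F where "F = (\<lambda>t. - exp (y 0 * t) * H (r - t))"
  have X: "(LBINT t=ereal 0..ereal r. exp (y 0 * t) * f (r - t)) = F r - F 0"
  proof (rule interval_integral_FTC_finite)
    show "continuous_on {min 0 r..max 0 r} (\<lambda>t. exp (y 0 * t) * f (r - t))"
      unfolding f_def
      by (intro continuous_at_imp_continuous_on ballI continuous_intros
            isCont_o2[OF _ Gfun_cont])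
    fix x
    have hD: "(H has_real_derivative (f (r - x) + y 0 * H (r - x))) (at (r - x))"
      unfolding H_def f_def by (rule Gfun_deriv)
    have hd0: "((\<lambda>t. H (r - t)) has_real_derivative ((f (r - x) + y 0 * H (r - x)) * (-1))) (at x)"
      by (rule DERIV_chain2[where g="\<lambda>t. r - t" and x=x, OF hD]) (auto intro!: derivative_eq_intros)
    have hd: "((\<lambda>t. H (r - t)) has_real_derivative (- (f (r - x) + y 0 * H (r - x)))) (at x)"
      using hd0 by simp
    have "(F has_real_derivative (exp (y 0 * x) * f (r - x))) (at x)"
      unfolding F_def
      by (rule derivative_eq_intros hd | simp)+ (simp add: algebra_simps)
    then show "(F has_vector_derivative exp (y 0 * x) * f (r - x)) (at x within {min 0 r..max 0 r})"
      by (simp add: has_real_derivative_iff_has_vector_derivative has_vector_derivative_at_within)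
  qed
  also have "\<dots> = H r" unfolding F_def H_def by (simp add: Gfun_zero)
  finally show ?thesis unfolding H_def f_def by (simp add: zero_ereal_def)
qed

lemma iter_gen:
  fixes y :: "nat \<Rightarrow> real" and C :: real and D :: nat
  defines "F \<equiv> (\<lambda>x. exp ((\<Sum>i<D. y i * x i) + y D * (C - (\<Sum>i<D. x i))))"
  shows "d + k = D \<Longrightarrow> r = C - (\<Sum>i<d. x i) \<Longrightarrow> r \<ge> 0 \<Longrightarrow>
    iter_int k d r F x = exp (\<Sum>i<d. y i * x i) * Gfun (Suc k) (\<lambda>i. y (d + i)) r"
proof (induction k arbitrary: d r x)
  case 0
  then show ?case unfolding F_def by (simp add: Gfun_one exp_add)
next
  case (Suc k)
  have "iter_int (Suc k) d r F x = (LBINT t=0..r. iter_int k (Suc d) (r - t) F (x(d := t)))"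
    by simp
  also have "\<dots> = (LBINT t=0..r. exp (\<Sum>i<d. y i * x i) * (exp (y d * t) * Gfun (Suc k) (\<lambda>i. y (d + Suc i)) (r - t)))"
  proof (rule interval_integral_cong)
    fix t assume t: "t \<in> einterval (min 0 (ereal r)) (max 0 (ereal r))"
    then have t0: "0 \<le> t" "t \<le> r" using Suc.prems(3) by (auto simp: einterval_def)
    have s1: "(\<Sum>i<d. (x(d := t)) i) = (\<Sum>i<d. x i)" by (rule sum.cong) auto
    have s2: "(\<Sum>i<d. y i * (x(d := t)) i) = (\<Sum>i<d. y i * x i)" by (rule sum.cong) auto
    have "iter_int k (Suc d) (r - t) F (x(d := t)) =
      exp (\<Sum>i<Suc d. y i * (x(d := t)) i) * Gfun (Suc k) (\<lambda>i. y (Suc d + i)) (r - t)"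
      by (rule Suc.IH) (use Suc.prems t0 s1 in auto)
    also have "\<dots> = exp (\<Sum>i<d. y i * x i) * (exp (y d * t) * Gfun (Suc k) (\<lambda>i. y (d + Suc i)) (r - t))"
      using s2 by (simp add: exp_add)
    finally show "iter_int k (Suc d) (r - t) F (x(d := t)) = exp (\<Sum>i<d. y i * x i) * (exp (y d * t) * Gfun (Suc k) (\<lambda>i. y (d + Suc i)) (r - t))" .
  qed
  also have "\<dots> = exp (\<Sum>i<d. y i * x i) * (LBINT t=0..r. exp (y d * t) * Gfun (Suc k) (\<lambda>i. y (d + Suc i)) (r - t))"
    by simp
  also have "(LBINT t=0..r. exp (y d * t) * Gfun (Suc k) (\<lambda>i. y (d + Suc i)) (r - t)) = Gfun (Suc (Suc k)) (\<lambda>i. y (d + i)) r"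
    using conv[of r "\<lambda>i. y (d + i)" k] Suc.prems(3) by simp
  finally show ?case .
qed

lemma iter_final:
  assumes "n \<ge> 1" "c \<ge> 0"
  shows "iter_int (n - 1) 0 c
           (\<lambda>x. exp ((\<Sum>i<n - 1. y i * x i) + y (n - 1) * (c - (\<Sum>i<n - 1. x i))))
           (\<lambda>_. 0) = Gfun n y c"
  using iter_gen[where y=y and C=c and D="n - 1" and d=0 and k="n - 1" and r=c and x="\<lambda>_. 0"] assms by simp




lemma geo_fps: "Abs_fps (\<lambda>m. (a::real) ^ m) * (1 - fps_const a * fps_X) = 1"
proof -
  have e: "Abs_fps (\<lambda>m. a ^ m) * (1 - fps_const a * fps_X) =
     Abs_fps (\<lambda>m. a ^ m) - fps_const a * (fps_X * Abs_fps (\<lambda>m. a ^ m))"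
    by (simp add: algebra_simps)
  show ?thesis unfolding e
    by (rule fps_ext) (auto simp: power_Suc[symmetric] simp del: power_Suc)
qed

lemma gs_fps: "Abs_fps (gs (Suc n) y) * (\<Prod>k<Suc n. (1 - fps_const (y k) * fps_X)) = fps_X ^ n"
proof (induction n arbitrary: y)
  case 0
  show ?case using geo_fps[of "y 0"] by simp
next
  case (Suc n)
  have A: "Abs_fps (gs (Suc (Suc n)) y) = fps_X * (Abs_fps (\<lambda>m. y 0 ^ m) * Abs_fps (gs (Suc n) (\<lambda>i. y (Suc i))))"
  proof (rule fps_ext)
    fix m show "fps_nth (Abs_fps (gs (Suc (Suc n)) y)) m = fps_nth (fps_X * (Abs_fps (\<lambda>m. y 0 ^ m) * Abs_fps (gs (Suc n) (\<lambda>i. y (Suc i))))) m"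
      by (cases m) (simp_all add: fps_mult_nth[of "Abs_fps _"] atLeast0AtMost)
  qed
  have P: "(\<Prod>k<Suc (Suc n). (1 - fps_const (y k) * fps_X)) =
    (1 - fps_const (y 0) * fps_X) * (\<Prod>k<Suc n. (1 - fps_const (y (Suc k)) * fps_X))"
    by (subst prod.lessThan_Suc_shift) simp
  have "Abs_fps (gs (Suc (Suc n)) y) * (\<Prod>k<Suc (Suc n). (1 - fps_const (y k) * fps_X)) =
     fps_X * (Abs_fps (\<lambda>m. y 0 ^ m) * (1 - fps_const (y 0) * fps_X)) *
     (Abs_fps (gs (Suc n) (\<lambda>i. y (Suc i))) * (\<Prod>k<Suc n. (1 - fps_const (y (Suc k)) * fps_X)))"
    unfolding A P by (simp add: mult_ac)
  also have "\<dots> = fps_X ^ Suc n" unfolding geo_fps Suc.IH by simp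
  finally show ?case .
qed

definition hcf :: "real \<Rightarrow> nat \<Rightarrow> real poly \<Rightarrow> real" where
  "hcf a j p = coeff (pcompose p [:a, 1:]) j"

lemma hcf_add: "hcf a j (p + q) = hcf a j p + hcf a j q"
  unfolding hcf_def by (simp add: pcompose_add)

lemma hcf_smult: "hcf a j (Polynomial.smult c p) = c * hcf a j p"
  unfolding hcf_def by (simp add: pcompose_smult)

lemma hcf_sum: "hcf a j (sum f A) = (\<Sum>i\<in>A. hcf a j (f i))"
  unfolding hcf_def by (simp add: pcompose_sum coeff_sum)

lemma pcompose_power': "pcompose (p ^ k) q = (pcompose p q) ^ k"
  for p q :: "real poly"
  by (induction k) (simp_all add: pcompose_mult pcompose_1)

lemma hcf_monom: "hcf a j (monom 1 r) = (if j \<le> r then of_nat (r choose j) * a ^ (r - j) else 0)"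
proof -
  have "pcompose (monom 1 r) [:a, 1:] = [:a, 1:] ^ r"
    unfolding monom_altdef pcompose_smult pcompose_power' by (simp add: pcompose_pCons)
  moreover have "coeff ([:a, 1:] ^ r) j = 0" if "\<not> j \<le> r"
    using that by (intro coeff_eq_0) (simp add: degree_linear_power)
  ultimately show ?thesis unfolding hcf_def
    using coeff_linear_poly_power[of j r a "1::real"] by auto
qed

lemma hcf_expand:
  assumes "degree q \<le> N"
  shows "hcf a j q = (\<Sum>d\<le>N. coeff q d * hcf a j (monom 1 d))"
proof -
  have "hcf a j q = hcf a j (\<Sum>d\<le>N. monom (coeff q d) d)"
    using poly_as_sum_of_monoms'[OF assms] by simp
  also have "\<dots> = (\<Sum>d\<le>N. coeff q d * hcf a j (monom 1 d))"
    unfolding hcf_sum by (intro sum.cong refl) (metis hcf_smult smult_monom mult.right_neutral)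
  finally show ?thesis .
qed

lemma pcomp_lin: "pcompose [:- a, 1:] [:a, 1:] = monom (1::real) 1"
  by (simp add: pcompose_pCons monom_Suc)

lemma hcf_dvd_zero:
  assumes "[:- a, 1:] ^ k dvd q" "j < k"
  shows "hcf a j q = 0"
proof -
  obtain r where r: "q = [:- a, 1:] ^ k * r" using assms(1) by (auto elim: dvdE)
  have "pcompose q [:a, 1:] = monom 1 k * pcompose r [:a, 1:]"
    unfolding r pcompose_mult pcompose_power' pcomp_lin by (simp add: monom_altdef)
  then show ?thesis unfolding hcf_def using assms(2) by (simp add: coeff_monom_mult)
qed

lemma hcf_diag: "hcf a j ([:- a, 1:] ^ j * q) = poly q a"
proof -
  have "pcompose ([:- a, 1:] ^ j * q) [:a, 1:] = monom 1 j * pcompose q [:a, 1:]"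
    unfolding pcompose_mult pcompose_power' pcomp_lin by (simp add: monom_altdef)
  then show ?thesis unfolding hcf_def
    by (simp add: coeff_monom_mult poly_0_coeff_0[symmetric] poly_pcompose)
qed




lemma LL_length: "length (concat (map (\<lambda>i. map (\<lambda>j. (i, j)) [0..<m i]) [0..<s])) = (\<Sum>i<s. m i)"
  by (induction s) auto

lemma LL_nth:
  fixes m :: "nat \<Rightarrow> nat"
  shows "c < length (concat (map (\<lambda>i. map (\<lambda>j. (i, j)) [0..<m i]) [0..<s])) \<Longrightarrow>
    fst (concat (map (\<lambda>i. map (\<lambda>j. (i, j)) [0..<m i]) [0..<s]) ! c) < s \<and>
    snd (concat (map (\<lambda>i. map (\<lambda>j. (i, j)) [0..<m i]) [0..<s]) ! c) < m (fst (concat (map (\<lambda>i. map (\<lambda>j. (i, j)) [0..<m i]) [0..<s]) ! c)) \<and>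
    c = (\<Sum>i<fst (concat (map (\<lambda>i. map (\<lambda>j. (i, j)) [0..<m i]) [0..<s]) ! c). m i) + snd (concat (map (\<lambda>i. map (\<lambda>j. (i, j)) [0..<m i]) [0..<s]) ! c)"
proof (induction s arbitrary: c)
  case 0 then show ?case by simp
next
  case (Suc s)
  let ?L = "concat (map (\<lambda>i. map (\<lambda>j. (i, j)) [0..<m i]) [0..<s])"
  have e: "concat (map (\<lambda>i. map (\<lambda>j. (i, j)) [0..<m i]) [0..<Suc s]) = ?L @ map (\<lambda>j. (s, j)) [0..<m s]"
    by simp
  show ?case
  proof (cases "c < length ?L")
    case True
    then have "concat (map (\<lambda>i. map (\<lambda>j. (i, j)) [0..<m i]) [0..<Suc s]) ! c = ?L ! c" unfolding e by (simp add: nth_append)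
    then show ?thesis using Suc.IH[OF True] by auto
  next
    case False
    then have "concat (map (\<lambda>i. map (\<lambda>j. (i, j)) [0..<m i]) [0..<Suc s]) ! c = (s, c - length ?L)" using Suc.prems unfolding e by (simp add: nth_append)
    then show ?thesis using False Suc.prems unfolding e by (simp add: LL_length)
  qed
qed

lemma LL_nth2:
  fixes m :: "nat \<Rightarrow> nat"
  assumes "i < s" "j < m i"
  shows "(\<Sum>i'<i. m i') + j < length (concat (map (\<lambda>i. map (\<lambda>j. (i, j)) [0..<m i]) [0..<s]))
    \<and> concat (map (\<lambda>i. map (\<lambda>j. (i, j)) [0..<m i]) [0..<s]) ! ((\<Sum>i'<i. m i') + j) = (i, j)"
  using assms
proof (induction s)
  case 0 then show ?case by simp
next
  case (Suc s)
  let ?L = "concat (map (\<lambda>i. map (\<lambda>j. (i, j)) [0..<m i]) [0..<s])"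
  have e: "concat (map (\<lambda>i. map (\<lambda>j. (i, j)) [0..<m i]) [0..<Suc s]) = ?L @ map (\<lambda>j. (s, j)) [0..<m s]"
    by simp
  show ?case
  proof (cases "i < s")
    case True
    then show ?thesis using Suc.IH[OF True Suc.prems(2)] unfolding e by (simp add: nth_append)
  next
    case False
    then have "i = s" using Suc.prems by simp
    then show ?thesis using Suc.prems unfolding e by (simp add: nth_append LL_length)
  qed
qed

locale LS = fixes y :: "nat \<Rightarrow> real" and n :: nat
begin

definition "kk = dvals y n"
definition "s = length kk"
definition "mm i = mult y n (kk ! i)"
definition "L = col_labels y n"
definition "fi c = fst (L ! c)"
definition "fj c = snd (L ! c)"
definition "z c = kk ! fi c"
definition "S i = (\<Sum>i'<i. mm i')"

lemma L_def': "L = concat (map (\<lambda>i. map (\<lambda>j. (i, j)) [0..<mm i]) [0..<s])"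
  unfolding L_def col_labels_def mm_def s_def kk_def ..

lemma kk_set: "set kk = y ` {..<n}"
  unfolding kk_def dvals_def by simp

lemma kk_distinct: "distinct kk"
  unfolding kk_def dvals_def by simp

lemma kk_less: "i < j \<Longrightarrow> j < s \<Longrightarrow> kk ! i < kk ! j"
  unfolding s_def kk_def dvals_def
  by (rule sorted_wrt_nth_less[OF strict_sorted_list_of_set]) auto

lemma kk_inj: "i < s \<Longrightarrow> j < s \<Longrightarrow> kk ! i = kk ! j \<longleftrightarrow> i = j"
  unfolding s_def using nth_eq_iff_index_eq[OF kk_distinct] by blast

lemma sum_mm: "(\<Sum>i<s. mm i) = n"
proof -
  have "n = card {..<n}" by simp
  also have "\<dots> = (\<Sum>k<n. 1)" by simp
  also have "\<dots> = (\<Sum>v\<in>y ` {..<n}. \<Sum>k\<in>{k. k \<in> {..<n} \<and> y k = v}. 1)"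
    by (rule sum.image_gen) simp
  also have "\<dots> = (\<Sum>v\<in>set kk. card {k. k < n \<and> y k = v})"
    unfolding kk_set by simp
  also have "\<dots> = sum_list (map (\<lambda>v. card {k. k < n \<and> y k = v}) kk)"
    by (rule sum_list_distinct_conv_sum_set[OF kk_distinct, symmetric])
  also have "\<dots> = (\<Sum>i<s. mm i)"
    unfolding sum_list_sum_nth s_def mm_def mult_def by (simp add: atLeast0LessThan)
  finally show ?thesis by simp
qed

lemma L_length: "length L = n"
  unfolding L_def' LL_length sum_mm ..

lemma lab: "c < n \<Longrightarrow> fi c < s \<and> fj c < mm (fi c) \<and> c = S (fi c) + fj c"
  using LL_nth[of c mm s] L_length unfolding fi_def fj_def S_def L_def'[symmetric] by auto

lemma lab2: "i < s \<Longrightarrow> j < mm i \<Longrightarrow> S i + j < n \<and> fi (S i + j) = i \<and> fj (S i + j) = j"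
  using LL_nth2[of i s j mm] L_length unfolding fi_def fj_def S_def L_def'[symmetric] by auto

lemma S_mono: "i < i' \<Longrightarrow> S i + mm i \<le> S i'"
proof -
  assume "i < i'"
  then have "{..<Suc i} \<subseteq> {..<i'}" by auto
  then have "(\<Sum>k<Suc i. mm k) \<le> (\<Sum>k<i'. mm k)" using sum_mono2[OF finite_lessThan] by blast
  then show ?thesis unfolding S_def by simp
qed

lemma fi_less: "l < n \<Longrightarrow> c < n \<Longrightarrow> fi l < fi c \<Longrightarrow> l < c"
  using lab[of l] lab[of c] S_mono[of "fi l" "fi c"] by linarith

lemma fi_mono: "l < n \<Longrightarrow> c < n \<Longrightarrow> l < c \<Longrightarrow> fi l \<le> fi c"
  using fi_less[of c l] by force

lemma z_eq: "l < n \<Longrightarrow> c < n \<Longrightarrow> z l = z c \<longleftrightarrow> fi l = fi c"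
  unfolding z_def using kk_inj lab by blast

lemma card_before: "c < n \<Longrightarrow> card {l. l < c \<and> fi l = fi c} = fj c"
proof -
  assume c: "c < n"
  have "{l. l < c \<and> fi l = fi c} = (\<lambda>j. S (fi c) + j) ` {..<fj c}"
  proof (intro equalityI subsetI)
    fix l assume l: "l \<in> {l. l < c \<and> fi l = fi c}"
    then have "l = S (fi c) + fj l" using lab[of l] c by auto
    moreover have "fj l < fj c" using l lab[of c] c \<open>l = S (fi c) + fj l\<close> by auto
    ultimately show "l \<in> (\<lambda>j. S (fi c) + j) ` {..<fj c}" by auto
  next
    fix l assume "l \<in> (\<lambda>j. S (fi c) + j) ` {..<fj c}"
    then obtain j where j: "j < fj c" "l = S (fi c) + j" by auto
    then show "l \<in> {l. l < c \<and> fi l = fi c}" using lab[of c] lab2[of "fi c" j] c by auto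
  qed
  then show ?thesis by (simp add: card_image inj_on_def)
qed

lemma card_fiber: "i < s \<Longrightarrow> card {l. l < n \<and> fi l = i} = mm i"
proof -
  assume i: "i < s"
  have "{l. l < n \<and> fi l = i} = (\<lambda>j. S i + j) ` {..<mm i}"
  proof (intro equalityI subsetI)
    fix l assume l: "l \<in> {l. l < n \<and> fi l = i}"
    then show "l \<in> (\<lambda>j. S i + j) ` {..<mm i}" using lab[of l] by force
  next
    fix l assume "l \<in> (\<lambda>j. S i + j) ` {..<mm i}"
    then show "l \<in> {l. l < n \<and> fi l = i}" using lab2[of i] i by auto
  qed
  then show ?thesis by (simp add: card_image inj_on_def)
qed

lemma mm_eq: "i < s \<Longrightarrow> mm i = card {k. k < n \<and> y k = kk ! i}"
  unfolding mm_def mult_def ..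

end



context LS begin

definition "hv p c = hcf (z c) (fj c) p"
definition "Amat v = mat n n (\<lambda>(r, c). if r < n - 1 then hv (monom 1 r) c else v c)"
definition "Cof c = cofactor (Amat (\<lambda>_. 0)) (n - 1) c"
definition "e m = det (Amat (hv (monom 1 m)))"
definition "PP = (\<Prod>k<n. [:- y k, 1:])"
definition "W = e (n - 1)"

lemma Amat_carrier: "Amat v \<in> carrier_mat n n"
  unfolding Amat_def by simp

lemma det_Amat:
  assumes "n \<ge> 1"
  shows "det (Amat v) = (\<Sum>c<n. v c * Cof c)"
proof -
  have "det (Amat v) = (\<Sum>c<n. Amat v $$ (n - 1, c) * cofactor (Amat v) (n - 1) c)"
    by (rule laplace_expansion_row[OF Amat_carrier]) (use assms in simp)
  also have "\<dots> = (\<Sum>c<n. v c * Cof c)"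
  proof (rule sum.cong[OF refl])
    fix c assume c: "c \<in> {..<n}"
    have "mat_delete (Amat v) (n - 1) c = mat_delete (Amat (\<lambda>_. 0)) (n - 1) c"
      by (rule eq_matI) (auto simp: mat_delete_def Amat_def)
    then show "Amat v $$ (n - 1, c) * cofactor (Amat v) (n - 1) c = v c * Cof c"
      using c assms unfolding Cof_def cofactor_def by (simp add: Amat_def)
  qed
  finally show ?thesis .
qed

lemma e_expand: "n \<ge> 1 \<Longrightarrow> e m = (\<Sum>c<n. hv (monom 1 m) c * Cof c)"
  unfolding e_def by (rule det_Amat)

lemma e_zero:
  assumes "m < n - 1"
  shows "e m = 0"
  unfolding e_def
proof (rule det_identical_rows[OF Amat_carrier, of m "n - 1"])
  show "row (Amat (hv (monom 1 m))) m = row (Amat (hv (monom 1 m))) (n - 1)"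
    by (rule eq_vecI) (use assms in \<open>auto simp: Amat_def\<close>)
qed (use assms in auto)

lemma det_poly:
  assumes "n \<ge> 1" "degree q \<le> N"
  shows "det (Amat (hv q)) = (\<Sum>d\<le>N. coeff q d * e d)"
proof -
  have "det (Amat (hv q)) = (\<Sum>c<n. (\<Sum>d\<le>N. coeff q d * hv (monom 1 d) c) * Cof c)"
    unfolding det_Amat[OF assms(1)] hv_def hcf_expand[OF assms(2)] ..
  also have "\<dots> = (\<Sum>d\<le>N. coeff q d * (\<Sum>c<n. hv (monom 1 d) c * Cof c))"
    by (simp add: sum_distrib_right sum_distrib_left mult.assoc sum.swap[of _ "{..<n}"])
  also have "\<dots> = (\<Sum>d\<le>N. coeff q d * e d)"
    using e_expand[OF assms(1)] by simp
  finally show ?thesis .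
qed

lemma PP_dvd:
  assumes c: "c < n"
  shows "[:- z c, 1:] ^ mm (fi c) dvd PP"
proof -
  let ?A = "{k. k < n \<and> y k = z c}"
  have "(\<Prod>k\<in>?A. [:- y k, 1:]) = (\<Prod>k\<in>?A. [:- z c, 1:])" by (rule prod.cong) auto
  also have "\<dots> = [:- z c, 1:] ^ card ?A" by simp
  also have "card ?A = mm (fi c)" using mm_eq[of "fi c"] lab[OF c] unfolding z_def by simp
  finally have "(\<Prod>k\<in>?A. [:- y k, 1:]) = [:- z c, 1:] ^ mm (fi c)" .
  moreover have "(\<Prod>k\<in>?A. [:- y k, 1:]) dvd PP"
    unfolding PP_def by (rule prod_dvd_prod_subset) auto
  ultimately show ?thesis by simp
qed

lemma det_PP:
  assumes "n \<ge> 1"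
  shows "det (Amat (hv (monom 1 a * PP))) = 0"
proof -
  have "hv (monom 1 a * PP) c = 0" if c: "c < n" for c
    unfolding hv_def
    by (rule hcf_dvd_zero[of _ "mm (fi c)"]) (use PP_dvd[OF c] lab[OF c] in auto)
  then show ?thesis unfolding det_Amat[OF assms] by simp
qed

lemma degree_PP: "degree PP = n"
  unfolding PP_def by (subst degree_prod_eq_sum_degree) auto

lemma lead_PP: "coeff PP n = 1"
  using lead_coeff_prod[of "\<lambda>k. [:- y k, 1:]" "{..<n}"] degree_PP unfolding PP_def by simp

lemma PP_nz: "PP \<noteq> 0"
  using lead_PP by auto

lemma refl_lin: "fps_of_poly (reflect_poly [:- a, 1:]) = 1 - fps_const (a::real) * fps_X"
  by (rule fps_ext) (auto simp: reflect_poly_def coeff_pCons split: nat.split)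

lemma fps_PP: "fps_of_poly (reflect_poly PP) = (\<Prod>k<n. (1 - fps_const (y k) * fps_X))"
  unfolding PP_def reflect_poly_prod fps_of_poly_prod refl_lin ..

lemma recur:
  assumes n1: "n \<ge> 1"
  shows "(\<Sum>i\<le>m. coeff (reflect_poly PP) i * e (m - i)) = (if m = n - 1 then W else 0)"
proof (cases "m \<ge> n")
  case True
  let ?Q = "monom 1 (m - n) * PP"
  have dQ: "degree ?Q \<le> m"
    using degree_mult_le[of "monom 1 (m - n)" PP] degree_PP True
    by (metis add.commute degree_monom_eq le_add_diff_inverse one_neq_zero)
  have "0 = (\<Sum>d\<le>m. coeff ?Q d * e d)"
    using det_poly[OF n1 dQ] det_PP[OF n1] by simp
  also have "\<dots> = (\<Sum>i\<le>m. coeff ?Q (m - i) * e (m - i))"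
    by (rule sum.reindex_bij_witness[where i="\<lambda>i. m - i" and j="\<lambda>i. m - i"]) auto
  also have "\<dots> = (\<Sum>i\<le>m. coeff (reflect_poly PP) i * e (m - i))"
  proof (rule sum.cong[OF refl])
    fix i assume i: "i \<in> {..m}"
    have "coeff ?Q (m - i) = coeff (reflect_poly PP) i"
      using i True unfolding coeff_monom_mult coeff_reflect_poly degree_PP
      by (auto simp: coeff_eq_0 degree_PP)
    then show "coeff ?Q (m - i) * e (m - i) = coeff (reflect_poly PP) i * e (m - i)" by simp
  qed
  finally show ?thesis using True n1 by simp
next
  case False
  have "(\<Sum>i\<le>m. coeff (reflect_poly PP) i * e (m - i)) =
        (\<Sum>i\<le>m. if i = 0 then (if m = n - 1 then W else 0) else 0)"
  proof (rule sum.cong[OF refl])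
    fix i assume i: "i \<in> {..m}"
    show "coeff (reflect_poly PP) i * e (m - i) = (if i = 0 then (if m = n - 1 then W else 0) else 0)"
    proof (cases "i = 0")
      case True
      then show ?thesis using False e_zero[of m] lead_PP
        unfolding W_def coeff_reflect_poly degree_PP by auto
    next
      case False': False
      then show ?thesis using False e_zero[of "m - i"] i by auto
    qed
  qed
  also have "\<dots> = (if m = n - 1 then W else 0)" by simp
  finally show ?thesis .
qed

lemma fps_e:
  assumes "n \<ge> 1"
  shows "fps_of_poly (reflect_poly PP) * Abs_fps e = fps_const W * fps_X ^ (n - 1)"
proof (rule fps_ext)
  fix m
  show "fps_nth (fps_of_poly (reflect_poly PP) * Abs_fps e) m = fps_nth (fps_const W * fps_X ^ (n - 1)) m"
  proof -
    have r: "fps_nth (fps_const W * fps_X ^ (n - 1)) m = (if m = n - 1 then W else 0)"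
      by (simp add: fps_X_power_iff)
    show ?thesis unfolding r using recur[OF assms, of m]
      by (simp add: fps_mult_nth[of "fps_of_poly _"] atLeast0AtMost)
  qed
qed

lemma e_gs:
  assumes "n \<ge> 1"
  shows "e m = W * gs n y m"
proof -
  obtain k where k: "n = Suc k" using assms by (cases n) auto
  have G: "Abs_fps (gs n y) * fps_of_poly (reflect_poly PP) = fps_X ^ (n - 1)"
    unfolding fps_PP using gs_fps[of k y] k by simp
  have "fps_of_poly (reflect_poly PP) * Abs_fps e = fps_of_poly (reflect_poly PP) * (fps_const W * Abs_fps (gs n y))"
    unfolding fps_e[OF assms] using G by (simp add: mult_ac)
  moreover have "fps_of_poly (reflect_poly PP) \<noteq> 0"
    using PP_nz by (metis coeff_0_reflect_poly_0_iff fps_of_poly_nth fps_zero_nth)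
  ultimately have "Abs_fps e = fps_const W * Abs_fps (gs n y)" by simp
  then have "fps_nth (Abs_fps e) m = fps_nth (fps_const W * Abs_fps (gs n y)) m" by simp
  then show ?thesis by simp
qed

end



context LS begin

definition "pp r = (\<Prod>l<r. [:- z l, 1:])"

lemma degree_pp: "degree (pp r) = r"
  unfolding pp_def by (subst degree_prod_eq_sum_degree) auto

lemma lead_pp: "coeff (pp r) r = 1"
  using lead_coeff_prod[of "\<lambda>l. [:- z l, 1:]" "{..<r}"] degree_pp[of r] unfolding pp_def by simp

lemma group_fi: "(\<Prod>l<n. H (fi l)) = (\<Prod>i<s. (H i :: real) ^ mm i)"
proof -
  have "(\<Prod>l<n. H (fi l)) = (\<Prod>i<s. \<Prod>l\<in>{l. l \<in> {..<n} \<and> fi l = i}. H (fi l))"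
    by (rule prod.group[symmetric]) (use lab in auto)
  also have "\<dots> = (\<Prod>i<s. H i ^ mm i)"
  proof (rule prod.cong[OF refl])
    fix i assume i: "i \<in> {..<s}"
    have "(\<Prod>l\<in>{l. l \<in> {..<n} \<and> fi l = i}. H (fi l)) = (\<Prod>l\<in>{l. l < n \<and> fi l = i}. H i)"
      by (rule prod.cong) auto
    also have "\<dots> = H i ^ mm i" using card_fiber[of i] i by simp
    finally show "(\<Prod>l\<in>{l. l \<in> {..<n} \<and> fi l = i}. H (fi l)) = H i ^ mm i" .
  qed
  finally show ?thesis .
qed

lemma TV_upper:
  assumes j: "j < i" and i: "i < n"
  shows "hv (pp i) j = 0"
proof -
  let ?A = "{l. l < i \<and> fi l = fi j}"
  let ?B = "{l. l < j \<and> fi l = fi j}"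
  have jn: "j < n" using i j by simp
  have sub: "insert j ?B \<subseteq> ?A" using j by auto
  have fA: "finite ?A" by (rule finite_subset[of _ "{..<i}"]) auto
  have fB: "finite ?B" by (rule finite_subset[of _ "{..<j}"]) auto
  have c1: "card (insert j ?B) \<le> card ?A" by (rule card_mono[OF fA sub])
  have c2: "card (insert j ?B) = Suc (card ?B)" by (rule card_insert_disjoint[OF fB]) simp
  have cA: "fj j + 1 \<le> card ?A" using c1 c2 card_before[OF jn] by linarith
  have "(\<Prod>l\<in>?A. [:- z l, 1:]) = (\<Prod>l\<in>?A. [:- z j, 1:])"
    by (rule prod.cong[OF refl]) (simp add: z_def)
  then have e1: "(\<Prod>l\<in>?A. [:- z l, 1:]) = [:- z j, 1:] ^ card ?A" by simp
  have d1: "(\<Prod>l\<in>?A. [:- z l, 1:]) dvd pp i"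
    unfolding pp_def by (rule prod_dvd_prod_subset) auto
  have d2: "[:- z j, 1:] ^ (fj j + 1) dvd [:- z j, 1:] ^ card ?A"
    by (rule le_imp_power_dvd[OF cA])
  have "[:- z j, 1:] ^ (fj j + 1) dvd pp i"
    using dvd_trans[OF d2 d1[unfolded e1]] .
  then show ?thesis unfolding hv_def by (rule hcf_dvd_zero) simp
qed

lemma TV_diag:
  assumes c: "c < n"
  shows "hv (pp c) c = (\<Prod>l\<in>{l. l < c \<and> fi l \<noteq> fi c}. (z c - z l))"
proof -
  let ?A = "{l. l < c \<and> fi l = fi c}" and ?B = "{l. l < c \<and> fi l \<noteq> fi c}"
  have u: "{..<c} = ?A \<union> ?B" by auto
  have "pp c = (\<Prod>l\<in>?A. [:- z l, 1:]) * (\<Prod>l\<in>?B. [:- z l, 1:])"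
    unfolding pp_def u by (rule prod.union_disjoint) auto
  also have "(\<Prod>l\<in>?A. [:- z l, 1:]) = (\<Prod>l\<in>?A. [:- z c, 1:])"
    by (rule prod.cong[OF refl]) (use z_eq[of _ c] c in auto)
  also have "\<dots> = [:- z c, 1:] ^ fj c" using card_before[OF c] by simp
  finally have "hv (pp c) c = poly (\<Prod>l\<in>?B. [:- z l, 1:]) (z c)"
    unfolding hv_def by (simp add: hcf_diag)
  also have "\<dots> = (\<Prod>l\<in>?B. (z c - z l))" by (simp add: poly_prod)
  finally show ?thesis .
qed

lemma W_diag:
  assumes n1: "n \<ge> 1"
  shows "W = (\<Prod>c<n. \<Prod>l\<in>{l. l < c \<and> fi l \<noteq> fi c}. (z c - z l))"
proof -
  define T where "T = mat n n (\<lambda>(r, k). coeff (pp r) k)"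
  define V where "V = Amat (hv (monom 1 (n - 1)))"
  have T: "T \<in> carrier_mat n n" unfolding T_def by simp
  have V: "V \<in> carrier_mat n n" unfolding V_def by (rule Amat_carrier)
  have Vi: "V $$ (r, c) = hv (monom 1 r) c" if "r < n" "c < n" for r c
  proof -
    have A: "Amat v $$ (r, c) = (if r < n - 1 then hv (monom 1 r) c else v c)" for v
      using that by (simp add: Amat_def)
    show ?thesis
    proof (cases "r < n - 1")
      case True then show ?thesis unfolding V_def A by simp
    next
      case False
      then have "r = n - 1" using that by linarith
      then show ?thesis unfolding V_def A by simp
    qed
  qed
  have TV: "(T * V) $$ (r, c) = hv (pp r) c" if r: "r < n" and c: "c < n" for r c
  proof -
    have "(T * V) $$ (r, c) = (\<Sum>k\<in>{0..<n}. coeff (pp r) k * hv (monom 1 k) c)"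
      using r c T V by (simp add: scalar_prod_def T_def Vi)
    also have "\<dots> = (\<Sum>k\<le>n - 1. coeff (pp r) k * hv (monom 1 k) c)"
      by (rule sum.cong) (use n1 in auto)
    also have "\<dots> = hv (pp r) c"
      unfolding hv_def by (rule hcf_expand[symmetric]) (use degree_pp r in simp)
    finally show ?thesis .
  qed
  have dT: "det T = 1"
  proof -
    have "det T = prod_list (diag_mat T)"
      by (rule det_lower_triangular[OF _ T]) (auto simp: T_def coeff_eq_0 degree_pp)
    also have "\<dots> = 1" unfolding prod_list_diag_prod using T by (simp add: T_def lead_pp)
    finally show ?thesis .
  qed
  have "W = det (T * V)" using det_mult[OF T V] dT unfolding W_def e_def V_def[symmetric] by simp
  also have "\<dots> = prod_list (diag_mat (T * V))"
  proof (rule det_upper_triangular)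
    show "upper_triangular (T * V)"
      unfolding upper_triangular_def
    proof (intro allI impI)
      fix i j assume i: "i < dim_row (T * V)" and ji: "j < i"
      have iN: "i < n" using i T by simp
      have jN: "j < n" using iN ji by simp
      show "(T * V) $$ (i, j) = 0" by (rule trans[OF TV[OF iN jN] TV_upper[OF ji iN]])
    qed
    show "T * V \<in> carrier_mat n n" using T V by simp
  qed
  also have "\<dots> = (\<Prod>i = 0..<n. (T * V) $$ (i, i))"
    unfolding prod_list_diag_prod using T by simp
  also have "\<dots> = (\<Prod>c<n. hv (pp c) c)"
  proof (rule prod.cong)
    show "{0..<n} = {..<n}" by auto
    fix c assume "c \<in> {..<n}"
    then show "(T * V) $$ (c, c) = hv (pp c) c" using TV by blast
  qed
  also have "\<dots> = (\<Prod>c<n. \<Prod>l\<in>{l. l < c \<and> fi l \<noteq> fi c}. (z c - z l))"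
    by (rule prod.cong[OF refl]) (simp add: TV_diag)
  finally show ?thesis .
qed

lemma W_formula:
  assumes n1: "n \<ge> 1"
  shows "W = (\<Prod>j<s. \<Prod>i<j. (kk ! j - kk ! i) ^ (mm i * mm j))"
proof -
  define f where "f i j = kk ! j - kk ! i" for i j
  define G where "G j = (\<Prod>l<n. if fi l < j then f (fi l) j else 1)" for j
  have "W = (\<Prod>c<n. \<Prod>l\<in>{l. l < c \<and> fi l \<noteq> fi c}. (z c - z l))" by (rule W_diag[OF n1])
  also have "\<dots> = (\<Prod>c<n. G (fi c))"
  proof (rule prod.cong[OF refl])
    fix c assume c: "c \<in> {..<n}"
    have "{l. l < c \<and> fi l \<noteq> fi c} = {l \<in> {..<n}. fi l < fi c}"
    proof (intro equalityI subsetI)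
      fix l assume l: "l \<in> {l. l < c \<and> fi l \<noteq> fi c}"
      then have "l < n" "l < c" "fi l \<noteq> fi c" using c by auto
      then have "fi l \<le> fi c" using fi_mono[of l c] c by simp
      then show "l \<in> {l \<in> {..<n}. fi l < fi c}" using \<open>l < n\<close> \<open>fi l \<noteq> fi c\<close> by simp
    next
      fix l assume l: "l \<in> {l \<in> {..<n}. fi l < fi c}"
      then have "l < n" "fi l < fi c" by auto
      then have "l < c" using fi_less[of l c] c by simp
      then show "l \<in> {l. l < c \<and> fi l \<noteq> fi c}" using \<open>fi l < fi c\<close> by simp
    qed
    then have "(\<Prod>l\<in>{l. l < c \<and> fi l \<noteq> fi c}. (z c - z l)) = (\<Prod>l\<in>{l \<in> {..<n}. fi l < fi c}. f (fi l) (fi c))"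
      unfolding z_def f_def by simp
    also have "\<dots> = G (fi c)" unfolding G_def by (rule prod.inter_filter) simp
    finally show "(\<Prod>l\<in>{l. l < c \<and> fi l \<noteq> fi c}. (z c - z l)) = G (fi c)" .
  qed
  also have "\<dots> = (\<Prod>j<s. G j ^ mm j)" by (rule group_fi)
  also have "\<dots> = (\<Prod>j<s. \<Prod>i<j. (kk ! j - kk ! i) ^ (mm i * mm j))"
  proof (rule prod.cong[OF refl])
    fix j assume j: "j \<in> {..<s}"
    have "G j = (\<Prod>i<s. (if i < j then f i j else 1) ^ mm i)"
      unfolding G_def by (rule group_fi)
    also have "\<dots> = (\<Prod>i<s. if i < j then f i j ^ mm i else 1)"
      by (rule prod.cong) auto
    also have "\<dots> = (\<Prod>i\<in>{i \<in> {..<s}. i < j}. f i j ^ mm i)"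
      by (rule prod.inter_filter[symmetric]) simp
    also have "{i \<in> {..<s}. i < j} = {..<j}" using j by auto
    finally have "G j = (\<Prod>i<j. f i j ^ mm i)" .
    then show "G j ^ mm j = (\<Prod>i<j. (kk ! j - kk ! i) ^ (mm i * mm j))"
      unfolding f_def by (simp add: prod_power_distrib power_mult)
  qed
  finally show ?thesis .
qed

lemma W_nz: "(\<Prod>j<s. \<Prod>i<j. (kk ! j - kk ! i) ^ (mm i * mm j)) \<noteq> 0"
proof -
  have "kk ! j - kk ! i \<noteq> 0" if "i < j" "j < s" for i j using kk_less[OF that] by simp
  then have "\<forall>j\<in>{..<s}. \<forall>i\<in>{..<j}. (kk ! j - kk ! i) ^ (mm i * mm j) \<noteq> 0" by simp
  then show ?thesis by (simp add: prod_zero_iff del: power_eq_0_iff)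
qed

end



lemma ser: "(\<lambda>m. hcf a j (monom 1 m) / fact m * x ^ m) sums (x ^ j * exp (x * a) / fact j)"
proof -
  define f where "f m = hcf a j (monom 1 m) / fact m * x ^ m" for m
  have z: "f i = 0" if "i < j" for i using that unfolding f_def hcf_monom by simp
  have sh: "(\<lambda>i. f (i + j)) = (\<lambda>i. x ^ j / fact j * ((x * a) ^ i /\<^sub>R fact i))"
  proof
    fix i
    have b: "real ((i + j) choose j) = fact (i + j) / (fact j * fact i)"
      using binomial_fact[of j "i + j", where 'a=real] by simp
    show "f (i + j) = x ^ j / fact j * ((x * a) ^ i /\<^sub>R fact i)"
      unfolding f_def hcf_monom using b by (simp add: power_add power_mult_distrib field_simps)
  qed
  have "(\<lambda>i. x ^ j / fact j * ((x * a) ^ i /\<^sub>R fact i)) sums (x ^ j / fact j * exp (x * a))"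
    by (rule sums_mult[OF exp_converges])
  then have "(\<lambda>i. f (i + j)) sums (x ^ j * exp (x * a) / fact j)" unfolding sh by simp
  then have "f sums (x ^ j * exp (x * a) / fact j)" using sums_zero_iff_shift[of j f] z by blast
  then show ?thesis unfolding f_def .
qed

context LS begin

lemma Mmat_Amat: "Mmat y n c' = Amat (\<lambda>col. c' ^ fj col * exp (c' * z col) / fact (fj col))"
  by (rule eq_matI) (auto simp: Mmat_def Amat_def hv_def hcf_monom Let_def fi_def fj_def z_def L_def kk_def)

lemma det_M:
  assumes n1: "n \<ge> 1"
  shows "det (Mmat y n c') = W * Gfun n y c'"
proof -
  obtain k where k: "n = Suc k" using n1 by (cases n) auto
  define t where "t col m = hv (monom 1 m) col / fact m * c' ^ m" for col m
  have ts: "(t col) sums (c' ^ fj col * exp (c' * z col) / fact (fj col))" for col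
    unfolding t_def hv_def by (rule ser)
  have "(\<lambda>m. \<Sum>col<n. t col m * Cof col) sums (\<Sum>col<n. (c' ^ fj col * exp (c' * z col) / fact (fj col)) * Cof col)"
    by (rule sums_sum) (rule sums_mult2[OF ts])
  moreover have "(\<lambda>m. \<Sum>col<n. t col m * Cof col) = (\<lambda>m. W * (gs n y m / fact m * c' ^ m))"
  proof
    fix m
    have "(\<Sum>col<n. t col m * Cof col) = e m / fact m * c' ^ m"
    proof -
      have "e m / fact m * c' ^ m = (\<Sum>col<n. hv (monom 1 m) col * Cof col / fact m * c' ^ m)"
        unfolding e_expand[OF n1] sum_divide_distrib sum_distrib_right ..
      also have "\<dots> = (\<Sum>col<n. t col m * Cof col)"
        unfolding t_def by (rule sum.cong) auto
      finally show ?thesis by simp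
    qed
    then show "(\<Sum>col<n. t col m * Cof col) = W * (gs n y m / fact m * c' ^ m)"
      using e_gs[OF n1, of m] by simp
  qed
  ultimately have "(\<lambda>m. W * (gs n y m / fact m * c' ^ m)) sums det (Mmat y n c')"
    unfolding Mmat_Amat det_Amat[OF n1] by simp
  moreover have "(\<lambda>m. W * (gs n y m / fact m * c' ^ m)) sums (W * Gfun n y c')"
    unfolding Gfun_def k by (rule sums_mult[OF summable_sums[OF gs_summable]])
  ultimately show ?thesis using sums_unique2 by blast
qed

end

theorem mainTheorem10:
  fixes y :: "nat \<Rightarrow> real" and n :: nat and \<gamma> :: real
  assumes "n \<ge> 1" and "0 \<le> \<gamma>" and "\<gamma> < 1"
  shows "iter_int (n - 1) 0 (1 - \<gamma>)
           (\<lambda>x. exp ((\<Sum>i<n - 1. y i * x i) + y (n - 1) * (1 - \<gamma> - (\<Sum>i<n - 1. x i))))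
           (\<lambda>_. 0)
         = Determinant.det (Mmat y n (1 - \<gamma>)) /
           (\<Prod>j<length (dvals y n). \<Prod>i<j.
              (dvals y n ! j - dvals y n ! i) ^ (mult y n (dvals y n ! i) * mult y n (dvals y n ! j)))
       \<and> (\<forall>\<gamma>'. \<forall>r<n - 1. \<forall>c<n. Mmat y n (1 - \<gamma>) $$ (r, c) = Mmat y n (1 - \<gamma>') $$ (r, c))"
proof
  let ?P = "(\<Prod>j<length (dvals y n). \<Prod>i<j.
              (dvals y n ! j - dvals y n ! i) ^ (mult y n (dvals y n ! i) * mult y n (dvals y n ! j)))"
  have P: "LS.W y n = ?P"
    using LS.W_formula[OF assms(1), of y] unfolding LS.s_def LS.kk_def LS.mm_def .
  have Pnz: "?P \<noteq> 0"
    using LS.W_nz[of y n] unfolding LS.s_def LS.kk_def LS.mm_def .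
  have "iter_int (n - 1) 0 (1 - \<gamma>)
           (\<lambda>x. exp ((\<Sum>i<n - 1. y i * x i) + y (n - 1) * (1 - \<gamma> - (\<Sum>i<n - 1. x i))))
           (\<lambda>_. 0) = Gfun n y (1 - \<gamma>)"
    by (rule iter_final) (use assms in auto)
  also have "\<dots> = Determinant.det (Mmat y n (1 - \<gamma>)) / ?P"
    using LS.det_M[OF assms(1), of y "1 - \<gamma>"] P Pnz by (simp add: field_simps)
  finally show "iter_int (n - 1) 0 (1 - \<gamma>)
           (\<lambda>x. exp ((\<Sum>i<n - 1. y i * x i) + y (n - 1) * (1 - \<gamma> - (\<Sum>i<n - 1. x i))))
           (\<lambda>_. 0) = Determinant.det (Mmat y n (1 - \<gamma>)) / ?P" .
  show "\<forall>\<gamma>'. \<forall>r<n - 1. \<forall>c<n. Mmat y n (1 - \<gamma>) $$ (r, c) = Mmat y n (1 - \<gamma>') $$ (r, c)"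
    by (auto simp: Mmat_def Let_def)
qed


end
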